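(* Let $k\ge 2$ and let $W\in\mathcal W^2_{5\times(3k+1)}$ be such that rows $W[2],W[3],W[4]$ each contain exactly $2k+1$ filled cells (i.e. $e(W[2])=e(W[3])=e(W[4])=1/3$). Then $e(W[1])\le -5/3$ or $e(W[5])\le -5/3$ (i.e. $W[1]$ or $W[5]$ contains at most $2k-1$ filled cells).
   Context: A 2-dimensional binary word of dimensions $h\times w$ is an $h\times w$ matrix with entries in $\{\square,\blacksquare\}$ (filled cells $\blacksquare$, empty cells $\square$); $|U|_\blacksquare$ is the number of filled cells of $U$. Two cells $(i,j),(i',j')$ are adjacent if $|i-i'|+|j-j'|=1$; the degree of a filled cell is the number of filled cells adjacent to it. $\mathcal W^2_{h\times w}$ is the set of $h\times w$ binary words in which every filled cell has degree at most $2$. $W[i]$ denotes row $i$ of $W$. The excess of an $a\times b$ word $U$ is $e(U)=|U|_\blacksquare-2ab/3$; for a row of length $3k+1$, $e=|\text{row}|_\blacksquare-2(3k+1)/3$. *)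

theory Defs
  imports Complex_Main
begin

(* A 2-dimensional binary word of dimensions h x w is modelled as a predicate
   W :: nat => nat => bool on cells (i,j) with 1 <= i <= h, 1 <= j <= w;
   W i j = True means cell (i,j) is filled. Values outside the grid are ignored. *)
type_synonym word2 = "nat \<Rightarrow> nat \<Rightarrow> bool"

definition cells :: "nat \<Rightarrow> nat \<Rightarrow> (nat \<times> nat) set" where
  "cells h w = {1..h} \<times> {1..w}"

definition adjacent :: "nat \<times> nat \<Rightarrow> nat \<times> nat \<Rightarrow> bool" where
  "adjacent c d \<longleftrightarrow>
     \<bar>int (fst c) - int (fst d)\<bar> + \<bar>int (snd c) - int (snd d)\<bar> = 1"

definition degree :: "nat \<Rightarrow> nat \<Rightarrow> word2 \<Rightarrow> nat \<times> nat \<Rightarrow> nat" where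
  "degree h w W c = card {d \<in> cells h w. W (fst d) (snd d) \<and> adjacent c d}"

definition W2 :: "nat \<Rightarrow> nat \<Rightarrow> word2 set" where
  "W2 h w = {W. \<forall>c \<in> cells h w. W (fst c) (snd c) \<longrightarrow> degree h w W c \<le> 2}"

definition row_count :: "nat \<Rightarrow> word2 \<Rightarrow> nat \<Rightarrow> nat" where
  "row_count w W i = card {j \<in> {1..w}. W i j}"

definition row_excess :: "nat \<Rightarrow> word2 \<Rightarrow> nat \<Rightarrow> real" where
  "row_excess w W i = real (row_count w W i) - 2 * real w / 3"

end

theory Submission
  imports Defs
begin


declare sum_of_bool_eq[simp del]

lemma shift1:
  fixes f g :: "nat \<Rightarrow> int"
  assumes "f 0 = 0" "g (Suc N) = 0"
  shows "(\<Sum>j\<le>Suc N. f j * g (j - 1)) = (\<Sum>i\<le>Suc N. f (Suc i) * g i)"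
proof -
  have "(\<Sum>j\<le>Suc N. f j * g (j - 1)) = f 0 * g 0 + (\<Sum>i\<le>N. f (Suc i) * g i)"
    by (subst sum.atMost_Suc_shift) simp
  also have "\<dots> = (\<Sum>i\<le>Suc N. f (Suc i) * g i)"
    using assms by simp
  finally show ?thesis .
qed

lemma deg_bound:
  assumes W: "W \<in> W2 h w" and r: "1 \<le> r" "r \<le> h" and j: "1 \<le> j" "j \<le> w" and f: "W r j"
  shows "of_bool (1 \<le> r-1 \<and> W (r-1) j) + of_bool (r+1 \<le> h \<and> W (r+1) j)
       + of_bool (1 \<le> j-1 \<and> W r (j-1)) + of_bool (j+1 \<le> w \<and> W r (j+1)) \<le> (2::int)"
proof -
  define N where "N = {d \<in> cells h w. W (fst d) (snd d) \<and> adjacent (r,j) d}"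
  have cN: "card N \<le> 2" using W r j f unfolding W2_def degree_def N_def cells_def by auto
  have fN: "finite N" unfolding N_def cells_def by auto
  have key: "False" if "x\<in>N" "y\<in>N" "z\<in>N" "x\<noteq>y" "x\<noteq>z" "y\<noteq>z" for x y z
  proof -
    have "card {x,y,z} \<le> card N" using that fN by (intro card_mono) auto
    moreover have "card {x,y,z} = 3" using that by auto
    ultimately show False using cN by simp
  qed
  have m1: "(r-1,j) \<in> N" if "1 \<le> r-1 \<and> W (r-1) j"
    using that r j unfolding N_def cells_def adjacent_def by auto
  have m2: "(r+1,j) \<in> N" if "r+1 \<le> h \<and> W (r+1) j"
    using that r j unfolding N_def cells_def adjacent_def by auto
  have m3: "(r,j-1) \<in> N" if "1 \<le> j-1 \<and> W r (j-1)"
    using that r j unfolding N_def cells_def adjacent_def by auto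
  have m4: "(r,j+1) \<in> N" if "j+1 \<le> w \<and> W r (j+1)"
    using that r j unfolding N_def cells_def adjacent_def by auto
  have d: "(r-1,j) \<noteq> (r+1,j)" "(r-1,j) \<noteq> (r,j-1)" "(r-1,j) \<noteq> (r,j+1)"
     "(r+1,j) \<noteq> (r,j-1)" "(r+1,j) \<noteq> (r,j+1)" "(r,j-1) \<noteq> (r,j+1)"
    using r j by auto
  have t1: "\<not> ((1 \<le> r-1 \<and> W (r-1) j) \<and> (r+1 \<le> h \<and> W (r+1) j) \<and> (1 \<le> j-1 \<and> W r (j-1)))"
    using key[OF m1 m2 m3 d(1) d(2) d(4)] by blast
  have t2: "\<not> ((1 \<le> r-1 \<and> W (r-1) j) \<and> (r+1 \<le> h \<and> W (r+1) j) \<and> (j+1 \<le> w \<and> W r (j+1)))"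
    using key[OF m1 m2 m4 d(1) d(3) d(5)] by blast
  have t3: "\<not> ((1 \<le> r-1 \<and> W (r-1) j) \<and> (1 \<le> j-1 \<and> W r (j-1)) \<and> (j+1 \<le> w \<and> W r (j+1)))"
    using key[OF m1 m3 m4 d(2) d(3) d(6)] by blast
  have t4: "\<not> ((r+1 \<le> h \<and> W (r+1) j) \<and> (1 \<le> j-1 \<and> W r (j-1)) \<and> (j+1 \<le> w \<and> W r (j+1)))"
    using key[OF m2 m3 m4 d(4) d(5) d(6)] by blast
  show ?thesis
    using t1 t2 t3 t4
    by (cases "1 \<le> r-1 \<and> W (r-1) j"; cases "r+1 \<le> h \<and> W (r+1) j";
        cases "1 \<le> j-1 \<and> W r (j-1)"; cases "j+1 \<le> w \<and> W r (j+1)"; simp only: of_bool_eq; simp)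
qed



lemma sum_rho:
  "(\<Sum>j\<le>Suc n. (of_bool (1 \<le> j \<and> j \<le> n) :: int)) = int n"
proof -
  have "(\<Sum>j\<le>Suc n. (of_bool (1 \<le> j \<and> j \<le> n) :: int)) = int (card ({..Suc n} \<inter> {j. 1 \<le> j \<and> j \<le> n}))"
    by (intro sum_of_bool_eq finite_atMost)
  also have "{..Suc n} \<inter> {j. 1 \<le> j \<and> j \<le> n} = {1..n}" by auto
  finally show ?thesis by simp
qed

lemma struct:
  fixes n k :: nat and B C D :: "nat \<Rightarrow> bool"
  assumes n: "n = 3*k+1"
  and rB: "\<And>j. B j \<Longrightarrow> 1 \<le> j \<and> j \<le> n"
  and rC: "\<And>j. C j \<Longrightarrow> 1 \<le> j \<and> j \<le> n"
  and rD: "\<And>j. D j \<Longrightarrow> 1 \<le> j \<and> j \<le> n"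
  and cB: "(\<Sum>j\<le>Suc n. of_bool (B j)) = (2*int k+1::int)"
  and cC: "(\<Sum>j\<le>Suc n. of_bool (C j)) = (2*int k+1::int)"
  and cD: "(\<Sum>j\<le>Suc n. of_bool (D j)) = (2*int k+1::int)"
  and degC: "\<And>j. C j \<Longrightarrow> of_bool (B j) + of_bool (D j) + of_bool (C (j-1)) + of_bool (C (j+1)) \<le> (2::int)"
  shows "(\<forall>j. 1\<le>j \<and> j\<le>n \<and> \<not> C j \<longrightarrow> B j \<and> D j)
       \<and> (\<forall>j. C j \<longrightarrow> of_bool (B j) + of_bool (D j) + of_bool (C (j-1)) + of_bool (C (j+1)) = (2::int))
       \<and> (\<forall>j\<le>n. C j \<or> C (Suc j))
       \<and> (\<exists>j. C j \<and> \<not> C (j-1) \<and> \<not> C (j+1))"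
proof -
  define b where "b j = (of_bool (B j) :: int)" for j
  define c where "c j = (of_bool (C j) :: int)" for j
  define d where "d j = (of_bool (D j) :: int)" for j
  define \<rho> where "\<rho> j = (of_bool (1 \<le> j \<and> j \<le> n) :: int)" for j
  define s1 where "s1 j = 2 * \<rho> j - b j - d j - c j * (c (j-1) + c (j+1))" for j
  define s2 where "s2 j = (1 - c j) * (1 - c (Suc j))" for j
  define P where "P = (\<Sum>j\<le>n. c j * c (Suc j))"
  have c0: "c 0 = 0" "c (Suc n) = 0" using rC[of 0] rC[of "Suc n"] unfolding c_def by auto
  have s1nn: "s1 j \<ge> 0" for j
  proof (cases "C j")
    case True
    then show ?thesis using degC[OF True] rC[OF True] unfolding s1_def b_def c_def d_def \<rho>_def by simp
  next
    case False
    then show ?thesis using rB[of j] rD[of j] unfolding s1_def b_def c_def d_def \<rho>_def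
      by (cases "B j"; cases "D j"; auto)
  qed
  have s2nn: "s2 j \<ge> 0" for j unfolding s2_def c_def by simp
  have Sc1: "(\<Sum>j\<le>n. c j) = 2*int k+1" using cC c0 unfolding c_def by simp
  have Sc2: "(\<Sum>j\<le>n. c (Suc j)) = 2*int k+1"
  proof -
    have "(\<Sum>j\<le>Suc n. c j) = c 0 + (\<Sum>j\<le>n. c (Suc j))" by (rule sum.atMost_Suc_shift)
    then show ?thesis using cC c0 unfolding c_def by simp
  qed
  have P1: "(\<Sum>j\<le>Suc n. c j * c (j+1)) = P" unfolding P_def using c0 by simp
  have P2: "(\<Sum>j\<le>Suc n. c j * c (j-1)) = P"
    unfolding P_def using shift1[of c c n] c0 by (simp add: mult.commute)
  have Ss1: "(\<Sum>j\<le>Suc n. s1 j) = 2 * int n - (2*int k+1) - (2*int k+1) - 2 * P"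
  proof -
    have "(\<Sum>j\<le>Suc n. s1 j) = 2 * (\<Sum>j\<le>Suc n. \<rho> j) - (\<Sum>j\<le>Suc n. b j) - (\<Sum>j\<le>Suc n. d j)
          - (\<Sum>j\<le>Suc n. c j * c (j-1)) - (\<Sum>j\<le>Suc n. c j * c (j+1))"
      unfolding s1_def by (simp add: sum.distrib sum_subtractf sum_distrib_left algebra_simps)
    then show ?thesis using P1 P2 sum_rho[of n] cB cD unfolding \<rho>_def b_def d_def by simp
  qed
  have Ss2: "(\<Sum>j\<le>n. s2 j) = int n + 1 - (2*int k+1) - (2*int k+1) + P"
  proof -
    have "(\<Sum>j\<le>n. s2 j) = (\<Sum>j\<le>n. 1) - (\<Sum>j\<le>n. c j) - (\<Sum>j\<le>n. c (Suc j)) + P"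
      unfolding s2_def P_def by (simp add: sum.distrib sum_subtractf algebra_simps)
    then show ?thesis using Sc1 Sc2 by simp
  qed
  have z1: "(\<Sum>j\<le>Suc n. s1 j) = 0" and z2: "(\<Sum>j\<le>n. s2 j) = 0"
  proof -
    have "(\<Sum>j\<le>Suc n. s1 j) \<ge> 0" "(\<Sum>j\<le>n. s2 j) \<ge> 0" using s1nn s2nn by (simp_all add: sum_nonneg del: sum.atMost_Suc)
    moreover have "(\<Sum>j\<le>Suc n. s1 j) + 2 * (\<Sum>j\<le>n. s2 j) = 0" using Ss1 Ss2 n by simp
    ultimately show "(\<Sum>j\<le>Suc n. s1 j) = 0" "(\<Sum>j\<le>n. s2 j) = 0" by linarith+
  qed
  have s1z: "s1 j = 0" if "j \<le> Suc n" for j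
    using z1 s1nn that by (simp add: sum_nonneg_eq_0_iff del: sum.atMost_Suc)
  have s2z: "s2 j = 0" if "j \<le> n" for j
    using z2 s2nn that by (simp add: sum_nonneg_eq_0_iff)
  have R1: "\<forall>j. 1\<le>j \<and> j\<le>n \<and> \<not> C j \<longrightarrow> B j \<and> D j"
  proof (intro allI impI)
    fix j assume h: "1\<le>j \<and> j\<le>n \<and> \<not> C j"
    then have "s1 j = 0" using s1z by simp
    then show "B j \<and> D j" using h unfolding s1_def \<rho>_def b_def c_def d_def
      by (cases "B j"; cases "D j"; simp)
  qed
  have R2: "\<forall>j. C j \<longrightarrow> of_bool (B j) + of_bool (D j) + of_bool (C (j-1)) + of_bool (C (j+1)) = (2::int)"
  proof (intro allI impI)
    fix j assume h: "C j"
    then have "s1 j = 0" using s1z rC[OF h] by simp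
    then show "of_bool (B j) + of_bool (D j) + of_bool (C (j-1)) + of_bool (C (j+1)) = (2::int)"
      using h rC[OF h] unfolding s1_def \<rho>_def b_def c_def d_def by simp
  qed
  have R3: "\<forall>j\<le>n. C j \<or> C (Suc j)"
  proof (intro allI impI)
    fix j assume "j \<le> n"
    then have "s2 j = 0" using s2z by simp
    then show "C j \<or> C (Suc j)" unfolding s2_def c_def by (cases "C j"; cases "C (Suc j)"; simp)
  qed
  have R4: "\<exists>j. C j \<and> \<not> C (j-1) \<and> \<not> C (j+1)"
  proof (rule ccontr)
    assume "\<not> ?thesis"
    then have le: "c j \<le> c j * (c (j-1) + c (j+1))" for j unfolding c_def
      by (cases "C j"; cases "C (j-1)"; cases "C (j+1)"; auto)
    have "(\<Sum>j\<le>Suc n. c j) \<le> (\<Sum>j\<le>Suc n. c j * (c (j-1) + c (j+1)))"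
      by (rule sum_mono) (rule le)
    also have "\<dots> = 2 * P" using P1 P2 by (simp add: distrib_left sum.distrib)
    finally have "2*int k + 1 \<le> 2 * P" using cC unfolding c_def by simp
    moreover have "2 * P = 2 * int k" using z1 Ss1 n by simp
    ultimately show False by simp
  qed
  show ?thesis using R1 R2 R3 R4 by blast
qed



lemma core:
  fixes n k j0 :: nat and A B C :: "nat \<Rightarrow> bool"
  assumes n: "n = 3*k+1"
  and rA: "\<And>j. A j \<Longrightarrow> 1 \<le> j \<and> j \<le> n"
  and rB: "\<And>j. B j \<Longrightarrow> 1 \<le> j \<and> j \<le> n"
  and rC: "\<And>j. C j \<Longrightarrow> 1 \<le> j \<and> j \<le> n"
  and cC: "(\<Sum>j\<le>Suc n. of_bool (C j)) = (2*int k+1::int)"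
  and degA: "\<And>j. A j \<Longrightarrow> of_bool (A (j-1)) + of_bool (A (j+1)) + of_bool (B j) \<le> (2::int)"
  and degB: "\<And>j. B j \<Longrightarrow> of_bool (B (j-1)) + of_bool (B (j+1)) + of_bool (C j) + of_bool (A j) \<le> (2::int)"
  and E1: "\<And>j. 1 \<le> j \<Longrightarrow> j \<le> n \<Longrightarrow> \<not> C j \<Longrightarrow> B j"
  and C3: "\<And>j. j \<le> n \<Longrightarrow> C j \<or> C (Suc j)"
  and noiso: "\<And>j. C j \<Longrightarrow> \<not> C (j-1) \<Longrightarrow> \<not> C (j+1) \<Longrightarrow> j = 1 \<or> j = n"
  and w1: "1 \<le> j0" and w2: "j0 \<le> n" and w3: "\<not> C j0" and w4: "B (j0-1)" and w5: "B (j0+1)"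
  shows "(\<Sum>j\<le>Suc n. of_bool (A j)) \<le> (2*int k - 1::int)"
proof -
  define a where "a j = (of_bool (A j) :: int)" for j
  define b where "b j = (of_bool (B j) :: int)" for j
  define c where "c j = (of_bool (C j) :: int)" for j
  define \<rho> where "\<rho> j = (of_bool (1 \<le> j \<and> j \<le> n) :: int)" for j
  define E where "E j = (of_bool (1 \<le> j \<and> j \<le> n \<and> \<not> C j) :: int)" for j
  define u where "u j = \<rho> j * (a j * b j - (1 - a j) * (1 - b j) - c j * b j)" for j
  define Q where "Q j = E j * (2 * b (j-1) * b (j+1) + u (j-1) + u (j+1)) + u j * (1 - E (j-1) - E (j+1))" for j
  have C1: "C 1" using C3[of 0] rC[of 0] by auto
  have Cn: "C n" using C3[of n] rC[of "Suc n"] by auto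
  have Qle: "Q j \<le> 0" for j
  proof (cases "1 \<le> j \<and> j \<le> n \<and> \<not> C j")
    case True
    then have j: "2 \<le> j" "j \<le> n - 1" "\<not> C j" proof -
      have "j \<noteq> 1" "j \<noteq> n" using True C1 Cn by auto
      then show "2 \<le> j" "j \<le> n - 1" "\<not> C j" using True by auto
    qed
    have cl: "C (j-1)" using C3[of "j-1"] j by auto
    have cr: "C (j+1)" using C3[of j] j by auto
    have bj: "B j" using E1 True by auto
    have El: "E (j-1) = 0" and Er: "E (j+1) = 0" using cl cr unfolding E_def by auto
    have Ej: "E j = 1" using True unfolding E_def by simp
    have rl: "\<rho> (j-1) = 1" "\<rho> (j+1) = 1" "\<rho> j = 1" using j unfolding \<rho>_def by auto
    have dB1: "B (j-1) \<Longrightarrow> \<not> A (j-1)" proof -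
      have e: "j - 1 + 1 = j" using j by simp
      show "B (j-1) \<Longrightarrow> \<not> A (j-1)" using degB[of "j-1"] cl bj unfolding e by (auto simp: of_bool_def split: if_splits)
    qed
    have dB2: "B (j+1) \<Longrightarrow> \<not> A (j+1)" using degB[of "j+1"] cr bj j by (auto simp: of_bool_def split: if_splits)
    have dB3: "B (j-1) \<Longrightarrow> B (j+1) \<Longrightarrow> \<not> A j" using degB[of j] bj by (auto simp: of_bool_def split: if_splits)
    have dA: "A j \<Longrightarrow> \<not> (A (j-1) \<and> A (j+1))" using degA[of j] bj by (auto simp: of_bool_def split: if_splits)
    show ?thesis unfolding Q_def El Er Ej using rl cl cr bj j dB1 dB2 dB3 dA
      unfolding u_def a_def b_def c_def
      by (cases "A (j-1)"; cases "A j"; cases "A (j+1)"; cases "B (j-1)"; cases "B (j+1)"; simp)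
  next
    case False
    then have Ej: "E j = 0" unfolding E_def by auto
    have unp: "u j \<le> 0" using False unfolding u_def \<rho>_def a_def b_def c_def
      by (cases "A j"; cases "B j"; cases "C j"; cases "1 \<le> j \<and> j \<le> n"; simp)
    have "E (j-1) + E (j+1) \<le> 1"
    proof (rule ccontr)
      assume "\<not> ?thesis"
      then have "E (j-1) = 1" "E (j+1) = 1" unfolding E_def of_bool_def by (auto split: if_splits)
      then have h: "1 \<le> j-1" "j+1 \<le> n" "\<not> C (j-1)" "\<not> C (j+1)" unfolding E_def of_bool_def by (auto split: if_splits)
      then have "C j" using False by auto
      then show False using noiso[of j] h by auto
    qed
    moreover have "E (j-1) \<ge> 0" "E (j+1) \<ge> 0" unfolding E_def by auto
    ultimately show ?thesis unfolding Q_def Ej using unp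
      by (simp add: mult_nonpos_nonneg)
  qed
  have E0: "E 0 = 0" "E (Suc n) = 0" unfolding E_def by auto
  have u0: "u 0 = 0" "u (Suc n) = 0" unfolding u_def \<rho>_def by auto
  have sh1: "(\<Sum>j\<le>Suc n. E j * u (j-1)) = (\<Sum>j\<le>Suc n. u j * E (j+1))"
    using shift1[of E u n] E0 u0 by (simp add: mult.commute)
  have sh2: "(\<Sum>j\<le>Suc n. E j * u (j+1)) = (\<Sum>j\<le>Suc n. u j * E (j-1))"
    using shift1[of u E n] E0 u0 by (simp add: mult.commute)
  have SQ: "(\<Sum>j\<le>Suc n. Q j) = (\<Sum>j\<le>Suc n. 2 * E j * b (j-1) * b (j+1)) + (\<Sum>j\<le>Suc n. u j)"
  proof -
    have "(\<Sum>j\<le>Suc n. Q j) = (\<Sum>j\<le>Suc n. 2 * E j * b (j-1) * b (j+1)) + (\<Sum>j\<le>Suc n. E j * u (j-1))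
        + (\<Sum>j\<le>Suc n. E j * u (j+1)) + (\<Sum>j\<le>Suc n. u j) - (\<Sum>j\<le>Suc n. u j * E (j-1))
        - (\<Sum>j\<le>Suc n. u j * E (j+1))"
      unfolding Q_def by (simp add: sum.distrib sum_subtractf algebra_simps del: sum.atMost_Suc)
    then show ?thesis using sh1 sh2 by simp
  qed
  have Sw: "(\<Sum>j\<le>Suc n. 2 * E j * b (j-1) * b (j+1)) \<ge> 2"
  proof -
    have "j0 \<in> {..Suc n}" using w2 by simp
    moreover have "2 * E j0 * b (j0-1) * b (j0+1) = 2" using w1 w2 w3 w4 w5 unfolding E_def b_def by simp
    moreover have "\<forall>j\<in>{..Suc n}. 0 \<le> 2 * E j * b (j-1) * b (j+1)" unfolding E_def b_def by simp
    ultimately show ?thesis using member_le_sum[of j0 "{..Suc n}" "\<lambda>j. 2 * E j * b (j-1) * b (j+1)"]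
      by (simp del: sum.atMost_Suc)
  qed
  have SQ0: "(\<Sum>j\<le>Suc n. Q j) \<le> 0" using Qle by (simp add: sum_nonpos del: sum.atMost_Suc)
  have Su: "(\<Sum>j\<le>Suc n. u j) \<le> -2" using SQ Sw SQ0 by linarith
  have pa: "a j = u j + \<rho> j - E j" for j
  proof (cases "1 \<le> j \<and> j \<le> n")
    case True
    then show ?thesis using E1[of j] unfolding u_def \<rho>_def a_def b_def c_def E_def
      by (cases "A j"; cases "B j"; cases "C j"; simp)
  next
    case False
    then show ?thesis using rA[of j] unfolding u_def \<rho>_def a_def E_def by auto
  qed
  have pE: "E j = \<rho> j - c j" for j
    using rC[of j] unfolding E_def \<rho>_def c_def by (cases "C j"; auto)
  have "(\<Sum>j\<le>Suc n. a j) = (\<Sum>j\<le>Suc n. u j) + (\<Sum>j\<le>Suc n. \<rho> j) - ((\<Sum>j\<le>Suc n. \<rho> j) - (\<Sum>j\<le>Suc n. c j))"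
    unfolding pa pE by (simp add: sum.distrib sum_subtractf del: sum.atMost_Suc)
  also have "\<dots> = (\<Sum>j\<le>Suc n. u j) + (2*int k+1)" using cC unfolding c_def by simp
  finally show ?thesis using Su unfolding a_def by simp
qed



lemma rc_sum:
  "(\<Sum>j\<le>Suc n. (of_bool (1 \<le> j \<and> j \<le> n \<and> W i j) :: int)) = int (row_count n W i)"
proof -
  have "(\<Sum>j\<le>Suc n. (of_bool (1 \<le> j \<and> j \<le> n \<and> W i j) :: int))
      = int (card ({..Suc n} \<inter> {j. 1 \<le> j \<and> j \<le> n \<and> W i j}))"
    by (intro sum_of_bool_eq finite_atMost)
  also have "{..Suc n} \<inter> {j. 1 \<le> j \<and> j \<le> n \<and> W i j} = {j \<in> {1..n}. W i j}" by auto
  finally show ?thesis unfolding row_count_def by simp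
qed

theorem mainTheorem13:
  fixes k :: nat and W :: word2
  assumes "k \<ge> 2"
    and "W \<in> W2 5 (3*k+1)"
    and "row_count (3*k+1) W 2 = 2*k+1"
    and "row_count (3*k+1) W 3 = 2*k+1"
    and "row_count (3*k+1) W 4 = 2*k+1"
  shows "row_excess (3*k+1) W 1 \<le> -5/3 \<or> row_excess (3*k+1) W 5 \<le> -5/3"
proof -
  define n where "n = 3*k+1"
  have k2: "k \<ge> 2" using assms(1) .
  have Wn: "W \<in> W2 5 n" using assms(2) unfolding n_def .
  define R where "R r j = (1 \<le> j \<and> j \<le> n \<and> W r j)" for r j
  have rR: "R r j \<Longrightarrow> 1 \<le> j \<and> j \<le> n" for r j unfolding R_def by auto
  have cnt: "(\<Sum>j\<le>Suc n. of_bool (R i j)) = int (row_count n W i)" for i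
    unfolding R_def by (rule rc_sum)
  have c2: "(\<Sum>j\<le>Suc n. of_bool (R 2 j)) = (2*int k+1::int)"
    using cnt[of 2] assms(3) unfolding n_def by simp
  have c3: "(\<Sum>j\<le>Suc n. of_bool (R 3 j)) = (2*int k+1::int)"
    using cnt[of 3] assms(4) unfolding n_def by simp
  have c4: "(\<Sum>j\<le>Suc n. of_bool (R 4 j)) = (2*int k+1::int)"
    using cnt[of 4] assms(5) unfolding n_def by simp
  have deg0: "of_bool (1 \<le> r-1 \<and> W (r-1) j) + of_bool (r+1 \<le> 5 \<and> W (r+1) j)
       + of_bool (1 \<le> j-1 \<and> W r (j-1)) + of_bool (j+1 \<le> n \<and> W r (j+1)) \<le> (2::int)"
    if "1 \<le> r" "r \<le> 5" "R r j" for r j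
    using that by (intro deg_bound[OF Wn]) (auto simp: R_def)
  have eqs: "(1 \<le> j-1 \<and> W r (j-1)) = R r (j-1)" "(j+1 \<le> n \<and> W r (j+1)) = R r (j+1)"
    if "R r j" for r j using that unfolding R_def by auto
  have deg: "of_bool (R (r-1) j) + of_bool (R (r+1) j) + of_bool (R r (j-1)) + of_bool (R r (j+1)) \<le> (2::int)"
    if "2 \<le> r" "r \<le> 4" "R r j" for r j
  proof -
    have "(1 \<le> r-1 \<and> W (r-1) j) = R (r-1) j" "(r+1 \<le> 5 \<and> W (r+1) j) = R (r+1) j"
      using that unfolding R_def by auto
    then show ?thesis using deg0[of r j] that unfolding eqs[OF that(3)] by simp
  qed
  have deg1: "of_bool (R 1 (j-1)) + of_bool (R 1 (j+1)) + of_bool (R 2 j) \<le> (2::int)"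
    if "R 1 j" for j
  proof -
    have "(1 \<le> (1::nat)-1 \<and> W (1-1) j) = False" "((1::nat)+1 \<le> 5 \<and> W (1+1) j) = R 2 j"
      using that unfolding R_def by (auto simp: numeral_2_eq_2)
    then show ?thesis using deg0[of 1 j] that unfolding eqs[OF that] by simp
  qed
  have deg5: "of_bool (R 5 (j-1)) + of_bool (R 5 (j+1)) + of_bool (R 4 j) \<le> (2::int)"
    if "R 5 j" for j
  proof -
    have "(1 \<le> (5::nat)-1 \<and> W (5-1) j) = R 4 j" "((5::nat)+1 \<le> 5 \<and> W (5+1) j) = False"
      using that unfolding R_def by auto
    then show ?thesis using deg0[of 5 j] that unfolding eqs[OF that] by simp
  qed
  have degC: "of_bool (R 2 j) + of_bool (R 4 j) + of_bool (R 3 (j-1)) + of_bool (R 3 (j+1)) \<le> (2::int)"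
    if "R 3 j" for j using deg[of 3 j] that by simp
  have S: "(\<forall>j. 1\<le>j \<and> j\<le>n \<and> \<not> R 3 j \<longrightarrow> R 2 j \<and> R 4 j)
       \<and> (\<forall>j. R 3 j \<longrightarrow> of_bool (R 2 j) + of_bool (R 4 j) + of_bool (R 3 (j-1)) + of_bool (R 3 (j+1)) = (2::int))
       \<and> (\<forall>j\<le>n. R 3 j \<or> R 3 (Suc j))
       \<and> (\<exists>j. R 3 j \<and> \<not> R 3 (j-1) \<and> \<not> R 3 (j+1))"
    by (rule struct[OF n_def rR rR rR c2 c3 c4 degC])
  then have E1: "\<And>j. 1\<le>j \<Longrightarrow> j\<le>n \<Longrightarrow> \<not> R 3 j \<Longrightarrow> R 2 j \<and> R 4 j"
    and C2: "\<And>j. R 3 j \<Longrightarrow> of_bool (R 2 j) + of_bool (R 4 j) + of_bool (R 3 (j-1)) + of_bool (R 3 (j+1)) = (2::int)"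
    and C3: "\<And>j. j \<le> n \<Longrightarrow> R 3 j \<or> R 3 (Suc j)"
    and C4: "\<exists>j. R 3 j \<and> \<not> R 3 (j-1) \<and> \<not> R 3 (j+1)" by blast+
  have noiso: "j = 1 \<or> j = n" if h: "R 3 j" "\<not> R 3 (j-1)" "\<not> R 3 (j+1)" for j
  proof (rule ccontr)
    assume "\<not> ?thesis"
    then have j: "2 \<le> j" "j + 1 \<le> n" using rR[OF h(1)] by auto
    have "R 2 j" using C2[OF h(1)] h(2,3) by (auto simp: of_bool_def split: if_splits)
    moreover have "R 2 (j-1)" "R 2 (j+1)" using E1[of "j-1"] E1[of "j+1"] h j by auto
    ultimately show False using deg[of 2 j] h(1) by (simp add: of_bool_def split: if_splits)
  qed
  have top: "(\<Sum>j\<le>Suc n. of_bool (R 1 j)) \<le> (2*int k - 1::int)"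
    if "1 \<le> j0" "j0 \<le> n" "\<not> R 3 j0" "R 2 (j0-1)" "R 2 (j0+1)" for j0
  proof (rule core[OF n_def rR rR rR c3])
    show "of_bool (R 1 (j-1)) + of_bool (R 1 (j+1)) + of_bool (R 2 j) \<le> (2::int)" if "R 1 j" for j
      using deg1[of j] that by simp
    show "of_bool (R 2 (j-1)) + of_bool (R 2 (j+1)) + of_bool (R 3 j) + of_bool (R 1 j) \<le> (2::int)" if "R 2 j" for j
      using deg[of 2 j] that by simp
  qed (use E1 C3 noiso that in auto)
  have bot: "(\<Sum>j\<le>Suc n. of_bool (R 5 j)) \<le> (2*int k - 1::int)"
    if "1 \<le> j0" "j0 \<le> n" "\<not> R 3 j0" "R 4 (j0-1)" "R 4 (j0+1)" for j0
  proof (rule core[OF n_def rR rR rR c3])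
    show "of_bool (R 5 (j-1)) + of_bool (R 5 (j+1)) + of_bool (R 4 j) \<le> (2::int)" if "R 5 j" for j
      using deg5[of j] that by simp
    show "of_bool (R 4 (j-1)) + of_bool (R 4 (j+1)) + of_bool (R 3 j) + of_bool (R 5 j) \<le> (2::int)" if "R 4 j" for j
      using deg[of 4 j] that by simp
  qed (use E1 C3 noiso that in auto)
  have n7: "n \<ge> 7" using k2 unfolding n_def by simp
  have fin: "(\<Sum>j\<le>Suc n. of_bool (R 1 j)) \<le> (2*int k - 1::int) \<or> (\<Sum>j\<le>Suc n. of_bool (R 5 j)) \<le> (2*int k - 1::int)"
  proof -
    obtain j where h: "R 3 j" "\<not> R 3 (j-1)" "\<not> R 3 (j+1)" using C4 by blast
    have "j = 1 \<or> j = n" using noiso[OF h] .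
    then show ?thesis
    proof
      assume j1: "j = 1"
      have e: "(3::nat) - 1 = 2" "(3::nat) + 1 = 4" "(1::nat) + 1 = 2" "(2::nat) - 1 = 1" "(2::nat) + 1 = 3"
        "(1::nat) - 1 = 0" "Suc 2 = 3" by auto
      have n2: "\<not> R 3 2" using h(3) unfolding j1 e .
      have b2: "R 2 2" "R 4 2" using E1[of 2] n2 n7 by auto
      have r3: "R 3 3" using C3[of 2] n2 n7 unfolding e by simp
      have r4: "R 3 4"
      proof (rule ccontr)
        assume "\<not> R 3 4"
        then show False using noiso[of 3] r3 n2 n7 unfolding e by simp
      qed
      have "of_bool (R 2 3) + of_bool (R 4 3) + of_bool (R 3 2) + of_bool (R 3 4) = (2::int)"
        using C2[OF r3] unfolding e .
      then have o3: "R 2 3 \<or> R 4 3" using n2 r4 by (auto simp: of_bool_def split: if_splits)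
      have r0: "\<not> R 3 0" using rR[of 3 0] by auto
      have "of_bool (R 2 1) + of_bool (R 4 1) + of_bool (R 3 0) + of_bool (R 3 2) = (2::int)"
        using C2[of 1] h unfolding j1 e by simp
      then have b1: "R 2 1" "R 4 1" using r0 n2 by (auto simp: of_bool_def split: if_splits)
      from o3 show ?thesis
      proof
        assume "R 2 3" then show ?thesis using top[of 2] n2 n7 b1 unfolding e by simp
      next
        assume "R 4 3" then show ?thesis using bot[of 2] n2 n7 b1 unfolding e by simp
      qed
    next
      assume jn: "j = n"
      have e: "Suc (n-2) = n-1" "n-2-1 = n-3" "n-2+1 = n-1" "n-1-1 = n-2" "n-1+1 = n" using n7 by auto
      have n2: "\<not> R 3 (n-1)" using h(2) jn by simp
      have b2: "R 2 (n-1)" "R 4 (n-1)" using E1[of "n-1"] n2 n7 by auto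
      have r3: "R 3 (n-2)" using C3[of "n-2"] n2 n7 unfolding e by simp
      have r4: "R 3 (n-3)"
      proof (rule ccontr)
        assume "\<not> R 3 (n-3)"
        then have "n - 2 = 1 \<or> n - 2 = n" using noiso[of "n-2"] r3 n2 unfolding e by simp
        then show False using n7 by linarith
      qed
      have "of_bool (R 2 (n-2)) + of_bool (R 4 (n-2)) + of_bool (R 3 (n-3)) + of_bool (R 3 (n-1)) = (2::int)"
        using C2[OF r3] unfolding e .
      then have o3: "R 2 (n-2) \<or> R 4 (n-2)" using n2 r4 by (auto simp: of_bool_def split: if_splits)
      have rn: "R 3 n" using h jn by simp
      have r0: "\<not> R 3 (n+1)" using rR[of 3 "n+1"] by auto
      have "of_bool (R 2 n) + of_bool (R 4 n) + of_bool (R 3 (n-1)) + of_bool (R 3 (n+1)) = (2::int)"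
        using C2[OF rn] .
      then have b1: "R 2 n" "R 4 n" using r0 n2 by (auto simp: of_bool_def split: if_splits)
      from o3 show ?thesis
      proof
        assume "R 2 (n-2)" then show ?thesis using top[of "n-1"] n2 n7 b1 unfolding e by simp
      next
        assume "R 4 (n-2)" then show ?thesis using bot[of "n-1"] n2 n7 b1 unfolding e by simp
      qed
    qed
  qed
  have ex: "row_excess n W i \<le> -5/3" if "(\<Sum>j\<le>Suc n. of_bool (R i j)) \<le> (2*int k - 1::int)" for i
  proof -
    have "int (row_count n W i) \<le> 2*int k - 1" using that cnt[of i] by simp
    then have "real (row_count n W i) \<le> 2*real k - 1" by linarith
    then show ?thesis unfolding row_excess_def n_def by (simp add: field_simps)
  qed
  show ?thesis using fin ex unfolding n_def by blast
qed


end
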